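(* Let $\mathfrak{H}$ be a Euclidean space and let $(\mathcal{X},\mathsf{S},\gamma,(\Lambda_{a})_{a\in\mathcal{A}})$ be a spectral decomposition system for $\mathfrak{H}$ such that the set $\{\Lambda_a\}_{a\in\mathcal{A}}$ is closed in $\mathscr{L}(\mathcal{X},\mathfrak{H})$. Let $D$ be a nonempty $\mathsf{S}$-invariant subset of $\mathcal{X}$ and let $X\in\mathfrak{H}$. Then: (i) $N_{\mathsf{F}}(X;\gamma^{-1}(D))=\{\Lambda_a y: y\in N_{\mathsf{F}}(\gamma(X);D)\ \text{and}\ a\in\mathcal{A}_X\}$; (ii) $N_{\mathsf{L}}(X;\gamma^{-1}(D))=\{\Lambda_a y: y\in N_{\mathsf{L}}(\gamma(X);D)\ \text{and}\ a\in\mathcal{A}_X\}$.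
   Context: A Euclidean space is a finite-dimensional real Hilbert space; $\mathscr{L}(\mathcal{X},\mathfrak{H})$ carries the operator-norm topology. A spectral decomposition system for a Euclidean space $\mathfrak{H}$ is a tuple $(\mathcal{X},\mathsf{S},\gamma,(\Lambda_a)_{a\in\mathcal{A}})$ where $\mathcal{X}$ is a Euclidean space, $\mathsf{S}$ is a group acting on $\mathcal{X}$ such that each map $x\mapsto \mathsf{s}\cdot x$ is a linear isometry, $\gamma\colon\mathfrak{H}\to\mathcal{X}$ is a mapping, and each $\Lambda_a\colon\mathcal{X}\to\mathfrak{H}$ is a linear isometry, such that: [A] there exists a mapping $\tau\colon\mathcal{X}\to\mathcal{X}$ with $\tau(\mathsf{s}\cdot x)=\tau(x)$ for all $\mathsf{s},x$, $\tau(x)\in\mathsf{S}\cdot x$ for all $x$, and $\gamma\circ\Lambda_a=\tau$ for all $a\in\mathcal{A}$; [B] for every $X\in\mathfrak{H}$ there exists $a\in\mathcal{A}$ with $X=\Lambda_a\gamma(X)$; [C] $\langle X,Y\rangle\le\langle\gamma(X),\gamma(Y)\rangle$ for all $X,Y\in\mathfrak{H}$. $\mathcal{A}_X=\{a\in\mathcal{A}:X=\Lambda_a\gamma(X)\}$. A set $D\subset\mathcal{X}$ is $\mathsf{S}$-invariant if $\mathsf{s}\cdot x\in D$ for all $x\in D$, $\mathsf{s}\in\mathsf{S}$. For a nonempty subset $C$ of a Euclidean space $\mathcal{H}$: the Fréchet normal cone is $N_{\mathsf{F}}(x;C)=\{y:\limsup_{z\to x,\,z\in C\setminus\{x\}}\langle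 z-x,y\rangle/\|z-x\|\le0\}$ if $x\in C$, $\varnothing$ otherwise; the limiting normal cone $N_{\mathsf{L}}(x;C)$, for $x\in C$, is the set of $y$ for which there exist $x_n\to x$, $y_n\to y$ with $y_n\in N_{\mathsf{F}}(x_n;C)$ for all $n$, and $N_{\mathsf{L}}(x;C)=\varnothing$ for $x\notin C$. *)

theory Defs
  imports "HOL-Analysis.Analysis" "HOL-Algebra.Group"
begin

definition lin_isometry :: "('a::real_normed_vector \<Rightarrow> 'b::real_normed_vector) \<Rightarrow> bool" where
  "lin_isometry f \<longleftrightarrow> linear f \<and> (\<forall>x. norm (f x) = norm x)"

definition isometric_group_action ::
  "('g, 'm) monoid_scheme \<Rightarrow> ('g \<Rightarrow> 'x::euclidean_space \<Rightarrow> 'x) \<Rightarrow> bool" where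
  "isometric_group_action G act \<longleftrightarrow>
     group G \<and>
     (\<forall>x. act \<one>\<^bsub>G\<^esub> x = x) \<and>
     (\<forall>g\<in>carrier G. \<forall>h\<in>carrier G. \<forall>x. act (g \<otimes>\<^bsub>G\<^esub> h) x = act g (act h x)) \<and>
     (\<forall>g\<in>carrier G. lin_isometry (act g))"

definition spectral_decomposition_system ::
  "('g, 'm) monoid_scheme \<Rightarrow> ('g \<Rightarrow> 'x::euclidean_space \<Rightarrow> 'x) \<Rightarrow> ('h::euclidean_space \<Rightarrow> 'x)
   \<Rightarrow> 'a set \<Rightarrow> ('a \<Rightarrow> 'x \<Rightarrow> 'h) \<Rightarrow> bool" where
  "spectral_decomposition_system G act \<gamma> A \<Lambda> \<longleftrightarrow>
     isometric_group_action G act \<and>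
     (\<forall>a\<in>A. lin_isometry (\<Lambda> a)) \<and>
     (\<exists>\<tau>. (\<forall>g\<in>carrier G. \<forall>x. \<tau> (act g x) = \<tau> x) \<and>
          (\<forall>x. \<exists>g\<in>carrier G. \<tau> x = act g x) \<and>
          (\<forall>a\<in>A. \<gamma> \<circ> \<Lambda> a = \<tau>)) \<and>
     (\<forall>X. \<exists>a\<in>A. X = \<Lambda> a (\<gamma> X)) \<and>
     (\<forall>X Y. inner X Y \<le> inner (\<gamma> X) (\<gamma> Y))"

definition spectral_index_set :: "('h \<Rightarrow> 'x) \<Rightarrow> 'a set \<Rightarrow> ('a \<Rightarrow> 'x \<Rightarrow> 'h) \<Rightarrow> 'h \<Rightarrow> 'a set" where
  "spectral_index_set \<gamma> A \<Lambda> X = {a \<in> A. X = \<Lambda> a (\<gamma> X)}"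

definition S_invariant :: "('g, 'm) monoid_scheme \<Rightarrow> ('g \<Rightarrow> 'x \<Rightarrow> 'x) \<Rightarrow> 'x set \<Rightarrow> bool" where
  "S_invariant G act D \<longleftrightarrow> (\<forall>x\<in>D. \<forall>g\<in>carrier G. act g x \<in> D)"

text \<open>Frechet normal cone (limsup as an extended real; empty limit filter gives -infinity).\<close>
definition frechet_normal_cone :: "'x::euclidean_space \<Rightarrow> 'x set \<Rightarrow> 'x set" where
  "frechet_normal_cone x C =
     (if x \<in> C then
        {y. Limsup (at x within (C - {x})) (\<lambda>z. ereal (inner (z - x) y / norm (z - x))) \<le> 0}
      else {})"

definition limiting_normal_cone :: "'x::euclidean_space \<Rightarrow> 'x set \<Rightarrow> 'x set" where
  "limiting_normal_cone x C =
     (if x \<in> C then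
        {y. \<exists>xs ys. xs \<longlonglongrightarrow> x \<and> ys \<longlonglongrightarrow> y \<and> (\<forall>n. ys n \<in> frechet_normal_cone (xs n) C)}
      else {})"

end

theory Submission
  imports Defs
begin


lemma lin_iso_inner:
  assumes "lin_isometry f" shows "inner (f x) (f y) = inner x y"
proof -
  have l: "linear f" and n: "\<And>z. norm (f z) = norm z" using assms by (auto simp: lin_isometry_def)
  have "f (x + y) = f x + f y" using l by (simp add: linear_add)
  then have "norm (f x + f y) = norm (x + y)" using n by metis
  then have "(norm (f x + f y))^2 = (norm (x+y))^2" by simp
  moreover have "inner (f x) (f x) = inner x x" "inner (f y) (f y) = inner y y"
    using n[of x] n[of y] by (metis power2_norm_eq_inner)+
  ultimately show ?thesis
    by (simp add: power2_norm_eq_inner inner_add_left inner_add_right inner_commute)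
qed

lemma lin_iso_diff: "lin_isometry f \<Longrightarrow> f (x - y) = f x - f y"
  by (simp add: lin_isometry_def linear_diff)
lemma lin_iso_add: "lin_isometry f \<Longrightarrow> f (x + y) = f x + f y"
  by (simp add: lin_isometry_def linear_add)
lemma lin_iso_scale: "lin_isometry f \<Longrightarrow> f (c *\<^sub>R x) = c *\<^sub>R f x"
  by (simp add: lin_isometry_def linear_scale)
lemma lin_iso_norm: "lin_isometry f \<Longrightarrow> norm (f x) = norm x"
  by (simp add: lin_isometry_def)

definition FN :: "'x::euclidean_space \<Rightarrow> 'x set \<Rightarrow> 'x set" where
  "FN x C = {y. x \<in> C \<and> (\<forall>e>0. \<exists>d>0. \<forall>z\<in>C. norm (z - x) < d \<longrightarrow> inner (z - x) y \<le> e * norm (z - x))}"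

lemma FN_eq: "frechet_normal_cone x C = FN x C"
proof (cases "x \<in> C")
  case False then show ?thesis by (simp add: frechet_normal_cone_def FN_def)
next
  case True
  have "Limsup (at x within (C - {x})) (\<lambda>z. ereal (inner (z - x) y / norm (z - x))) \<le> 0
     \<longleftrightarrow> (\<forall>e>0. \<exists>d>0. \<forall>z\<in>C. norm (z - x) < d \<longrightarrow> inner (z - x) y \<le> e * norm (z - x))" for y
  proof
    assume H: "Limsup (at x within (C - {x})) (\<lambda>z. ereal (inner (z - x) y / norm (z - x))) \<le> 0"
    show "\<forall>e>0. \<exists>d>0. \<forall>z\<in>C. norm (z - x) < d \<longrightarrow> inner (z - x) y \<le> e * norm (z - x)"
    proof (intro allI impI)
      fix e :: real assume e: "e > 0"
      have "eventually (\<lambda>z. ereal e > ereal (inner (z - x) y / norm (z - x))) (at x within (C - {x}))"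
        using Limsup_le_iff[THEN iffD1, OF H, rule_format, of "ereal e"] e by simp
      then obtain d where d: "d > 0" and hd: "\<forall>z\<in>C - {x}. z \<noteq> x \<and> dist z x < d \<longrightarrow> e > inner (z - x) y / norm (z - x)"
        unfolding eventually_at by auto
      show "\<exists>d>0. \<forall>z\<in>C. norm (z - x) < d \<longrightarrow> inner (z - x) y \<le> e * norm (z - x)"
      proof (intro exI[of _ d] conjI ballI impI d)
        fix z assume z: "z \<in> C" "norm (z - x) < d"
        show "inner (z - x) y \<le> e * norm (z - x)"
        proof (cases "z = x")
          case False
          then have np: "norm (z - x) > 0" by simp
          have "e > inner (z - x) y / norm (z - x)" using hd z False by (auto simp: dist_norm)
          then show ?thesis using np by (simp add: divide_less_eq)
        qed simp
      qed
    qed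
  next
    assume H: "\<forall>e>0. \<exists>d>0. \<forall>z\<in>C. norm (z - x) < d \<longrightarrow> inner (z - x) y \<le> e * norm (z - x)"
    show "Limsup (at x within (C - {x})) (\<lambda>z. ereal (inner (z - x) y / norm (z - x))) \<le> 0"
      unfolding Limsup_le_iff
    proof (intro allI impI)
      fix c :: ereal assume c: "c > 0"
      show "eventually (\<lambda>z. c > ereal (inner (z - x) y / norm (z - x))) (at x within (C - {x}))"
      proof (cases c)
        case (real r)
        then have r: "r > 0" using c by simp
        obtain d where d: "d > 0" and hd: "\<forall>z\<in>C. norm (z - x) < d \<longrightarrow> inner (z - x) y \<le> (r/2) * norm (z - x)"
          using H r by (meson half_gt_zero)
        show ?thesis unfolding eventually_at
        proof (intro exI[of _ d] conjI ballI impI d)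
          fix z assume z: "z \<in> C - {x}" "z \<noteq> x \<and> dist z x < d"
          then have np: "norm (z - x) > 0" by simp
          have "inner (z - x) y \<le> (r/2) * norm (z - x)" using hd z by (auto simp: dist_norm)
          also have "\<dots> < r * norm (z - x)" using np r by simp
          finally have "inner (z - x) y / norm (z - x) < r" using np by (simp add: divide_less_eq)
          then show "c > ereal (inner (z - x) y / norm (z - x))" using real by simp
        qed
      qed (use c in auto)
    qed
  qed
  then show ?thesis using True by (simp add: frechet_normal_cone_def FN_def)
qed


locale sds =
  fixes G :: "('g, 'm) monoid_scheme"
    and act :: "'g \<Rightarrow> 'x::euclidean_space \<Rightarrow> 'x"
    and \<gamma> :: "'h::euclidean_space \<Rightarrow> 'x"
    and A :: "'a set"
    and \<Lambda> :: "'a \<Rightarrow> 'x \<Rightarrow> 'h"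
    and \<tau> :: "'x \<Rightarrow> 'x"
    and D :: "'x set"
  assumes grp: "group G"
    and act_one: "\<And>x. act \<one>\<^bsub>G\<^esub> x = x"
    and act_mult: "\<And>g h x. g \<in> carrier G \<Longrightarrow> h \<in> carrier G \<Longrightarrow> act (g \<otimes>\<^bsub>G\<^esub> h) x = act g (act h x)"
    and act_iso: "\<And>g. g \<in> carrier G \<Longrightarrow> lin_isometry (act g)"
    and L_iso: "\<And>a. a \<in> A \<Longrightarrow> lin_isometry (\<Lambda> a)"
    and tau_orb: "\<And>x. \<exists>g\<in>carrier G. \<tau> x = act g x"
    and gL: "\<And>a x. a \<in> A \<Longrightarrow> \<gamma> (\<Lambda> a x) = \<tau> x"
    and decomp: "\<And>X. \<exists>a\<in>A. X = \<Lambda> a (\<gamma> X)"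
    and ineq: "\<And>X Y. inner X Y \<le> inner (\<gamma> X) (\<gamma> Y)"
    and closedA: "closed ((\<lambda>a. Blinfun (\<Lambda> a)) ` A)"
    and Dinv: "\<And>x g. x \<in> D \<Longrightarrow> g \<in> carrier G \<Longrightarrow> act g x \<in> D"
begin

lemma act_inv: "g \<in> carrier G \<Longrightarrow> act (inv\<^bsub>G\<^esub> g) (act g x) = x"
  using act_mult[of "inv\<^bsub>G\<^esub> g" g x] act_one grp by (simp add: group.l_inv group.inv_closed)

lemma norm_gamma: "norm (\<gamma> X) = norm X"
proof -
  obtain a where "a \<in> A" "X = \<Lambda> a (\<gamma> X)" using decomp by blast
  then show ?thesis using L_iso lin_iso_norm by metis
qed

lemma gamma_lip: "norm (\<gamma> X - \<gamma> Y) \<le> norm (X - Y)"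
proof -
  have "(norm (\<gamma> X - \<gamma> Y))^2 = (norm (\<gamma> X))^2 + (norm (\<gamma> Y))^2 - 2 * inner (\<gamma> X) (\<gamma> Y)"
    by (simp add: power2_norm_eq_inner inner_diff_left inner_diff_right inner_commute)
  also have "\<dots> \<le> (norm X)^2 + (norm Y)^2 - 2 * inner X Y" using norm_gamma ineq[of X Y] by simp
  also have "\<dots> = (norm (X - Y))^2"
    by (simp add: power2_norm_eq_inner inner_diff_left inner_diff_right inner_commute)
  finally show ?thesis using power2_le_imp_le by fastforce
qed

lemma memC: "a \<in> A \<Longrightarrow> \<gamma> (\<Lambda> a w) \<in> D \<longleftrightarrow> w \<in> D"
proof -
  assume a: "a \<in> A"
  obtain g where g: "g \<in> carrier G" "\<tau> w = act g w" using tau_orb by blast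
  have "\<gamma> (\<Lambda> a w) = act g w" using gL[OF a] g by simp
  then show ?thesis using Dinv[of _ g] Dinv[of _ "inv\<^bsub>G\<^esub> g"] g act_inv[of g w] grp
    by (metis group.inv_closed)
qed

lemma key:
  assumes a: "a \<in> A" and Z: "\<gamma> Z \<in> D"
  shows "\<exists>p\<in>D. norm p = norm Z \<and> inner Z (\<Lambda> a u) \<le> inner p u"
proof -
  obtain g where g: "g \<in> carrier G" "\<tau> u = act g u" using tau_orb by blast
  define p where "p = act (inv\<^bsub>G\<^esub> g) (\<gamma> Z)"
  have ig: "inv\<^bsub>G\<^esub> g \<in> carrier G" using g grp by (simp add: group.inv_closed)
  have gp: "act g p = \<gamma> Z"
    using act_inv[OF ig, of "\<gamma> Z"] grp g by (simp add: p_def group.inv_inv)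
  have "p \<in> D" using Dinv[OF Z ig] p_def by simp
  moreover have "norm p = norm Z" using gp act_iso[OF g(1)] lin_iso_norm norm_gamma by metis
  moreover have "inner Z (\<Lambda> a u) \<le> inner p u"
  proof -
    have "inner Z (\<Lambda> a u) \<le> inner (\<gamma> Z) (\<gamma> (\<Lambda> a u))" by (rule ineq)
    also have "\<dots> = inner (act g p) (act g u)" using gL[OF a] g gp by simp
    also have "\<dots> = inner p u" using lin_iso_inner act_iso[OF g(1)] by blast
    finally show ?thesis .
  qed
  ultimately show ?thesis by blast
qed


lemma frechet_up:
  assumes a: "a \<in> A" and y: "y \<in> FN w D"
  shows "\<Lambda> a y \<in> FN (\<Lambda> a w) (\<gamma> -` D)"
proof -
  let ?X = "\<Lambda> a w"
  have iso: "lin_isometry (\<Lambda> a)" using L_iso[OF a] .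
  have wD: "w \<in> D" and yH: "\<forall>e>0. \<exists>d>0. \<forall>z\<in>D. norm (z - w) < d \<longrightarrow> inner (z - w) y \<le> e * norm (z - w)"
    using y by (auto simp: FN_def)
  have XC: "?X \<in> \<gamma> -` D" using memC[OF a] wD by simp
  have "\<exists>d>0. \<forall>Z\<in>\<gamma> -` D. norm (Z - ?X) < d \<longrightarrow> inner (Z - ?X) (\<Lambda> a y) \<le> e * norm (Z - ?X)"
    if e: "e > 0" for e
  proof -
    define e' where "e' = e / 2"
    have e': "e' > 0" using e by (simp add: e'_def)
    obtain \<eta> where eta: "\<eta> > 0" and heta: "\<forall>z\<in>D. norm (z - w) < \<eta> \<longrightarrow> inner (z - w) y \<le> e' * norm (z - w)"
      using yH e' by blast
    define d where "d = e' * \<eta> / (norm y + 1)"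
    have ny: "norm y + 1 > 0" by (smt (verit) norm_ge_zero)
    have d: "d > 0" unfolding d_def using e' eta ny by (intro divide_pos_pos mult_pos_pos)
    show ?thesis
    proof (intro exI[of _ d] conjI d ballI impI)
      fix Z assume ZC: "Z \<in> \<gamma> -` D" and Zd: "norm (Z - ?X) < d"
      define \<rho> where "\<rho> = norm (Z - ?X)"
      show "inner (Z - ?X) (\<Lambda> a y) \<le> e * norm (Z - ?X)"
      proof (cases "\<rho> = 0")
        case True then show ?thesis by (simp add: \<rho>_def)
      next
        case False
        then have rp: "\<rho> > 0" by (simp add: \<rho>_def)
        define c where "c = e' / \<rho>"
        define u where "u = y + (2 * c) *\<^sub>R w"
        obtain p where pD: "p \<in> D" and pn: "norm p = norm Z" and pi: "inner Z (\<Lambda> a u) \<le> inner p u"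
          using key[OF a, of Z u] ZC by auto
        define s where "s = norm (p - w)"
        define q where "q = inner (p - w) y"
        define T where "T = inner (Z - ?X) (\<Lambda> a y)"
        have Lu: "\<Lambda> a u = \<Lambda> a y + (2 * c) *\<^sub>R ?X" using iso by (simp add: u_def lin_iso_add lin_iso_scale)
        have Xy: "inner ?X (\<Lambda> a y) = inner w y" using lin_iso_inner[OF iso] .
        have nX: "norm ?X = norm w" using lin_iso_norm[OF iso] .
        have r2: "\<rho>^2 = (norm Z)^2 + (norm ?X)^2 - 2 * inner Z ?X"
          by (simp add: \<rho>_def power2_norm_eq_inner inner_diff_left inner_diff_right inner_commute)
        have s2: "s^2 = (norm p)^2 + (norm w)^2 - 2 * inner p w"
          by (simp add: s_def power2_norm_eq_inner inner_diff_left inner_diff_right inner_commute)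
        have I1: "inner Z (\<Lambda> a y) + c * (2 * inner Z ?X) \<le> inner p y + c * (2 * inner p w)"
          using pi unfolding Lu by (simp add: u_def inner_add_right inner_add_left mult.assoc mult.left_commute)
        have e1: "c * \<rho>^2 = c * ((norm Z)^2 + (norm w)^2) - c * (2 * inner Z ?X)"
          using r2 nX by (simp add: right_diff_distrib)
        have e2: "c * s^2 = c * ((norm Z)^2 + (norm w)^2) - c * (2 * inner p w)"
          using s2 pn by (simp add: right_diff_distrib)
        have Te: "T = inner Z (\<Lambda> a y) - inner w y" using Xy by (simp add: T_def inner_diff_left)
        have qe: "q = inner p y - inner w y" by (simp add: q_def inner_diff_left)
        have T1: "T \<le> q + c * (\<rho>^2 - s^2)"
          using I1 e1 e2 Te qe by (simp add: right_diff_distrib)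
        then have T2: "\<rho> * T \<le> \<rho> * q + e' * (\<rho>^2 - s^2)"
        proof -
          have "\<rho> * T \<le> \<rho> * (q + c * (\<rho>^2 - s^2))" using T1 rp by (simp add: mult_left_mono)
          moreover have "\<rho> * (q + c * (\<rho>^2 - s^2)) = \<rho> * q + e' * (\<rho>^2 - s^2)" using rp by (simp add: c_def distrib_left)
          ultimately show ?thesis by simp
        qed
        have s0: "s \<ge> 0" by (simp add: s_def)
        have "\<rho> * T \<le> e' * \<rho>^2 * (5/4)"
        proof (cases "s < \<eta>")
          case True
          then have "q \<le> e' * s" using heta pD by (simp add: q_def s_def)
          then have "\<rho> * q \<le> \<rho> * (e' * s)" using rp by simp
          moreover have "e' * (\<rho> * s - s^2) \<le> e' * (\<rho>^2/4)"
          proof -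
            have "0 \<le> (\<rho> - 2 * s) * (\<rho> - 2 * s)" by simp
            then have "\<rho> * s - s^2 \<le> \<rho>^2/4" by (simp add: power2_eq_square algebra_simps)
            then show ?thesis using e' by (intro mult_left_mono) auto
          qed
          ultimately show ?thesis using T2 by (simp add: algebra_simps power2_eq_square)
        next
          case False
          have "q \<le> norm (p - w) * norm y" unfolding q_def by (rule norm_cauchy_schwarz)
          then have qs: "q \<le> s * norm y" by (simp add: s_def)
          have "\<rho> < e' * \<eta> / (norm y + 1)" using Zd by (simp add: \<rho>_def d_def)
          then have "\<rho> * (norm y + 1) < e' * \<eta>" using ny by (simp add: pos_less_divide_eq)
          then have "\<rho> * norm y \<le> e' * s" using False e' rp
            by (smt (verit) mult_left_mono mult_nonneg_nonneg norm_ge_zero)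
          then have "\<rho> * q \<le> e' * s * s" using qs rp s0
            by (smt (verit) mult_left_mono mult_right_mono mult.commute mult.assoc)
          moreover have "e' * (\<rho>^2 - s^2) = e' * \<rho>^2 - e' * s * s" by (simp add: right_diff_distrib power2_eq_square)
          moreover have "e' * \<rho>^2 \<le> e' * \<rho>^2 * (5/4)" using e' by simp
          ultimately show ?thesis using T2 by linarith
        qed
        then have "T \<le> e' * \<rho> * (5/4)" using rp by (simp add: power2_eq_square)
        moreover have "e * \<rho> \<ge> 0" using e rp by simp
        ultimately show ?thesis by (simp add: T_def \<rho>_def e'_def)
      qed
    qed
  qed
  then show ?thesis using XC by (simp add: FN_def)
qed

lemma frechet_down:
  assumes a: "a \<in> A" and V: "\<Lambda> a y \<in> FN (\<Lambda> a w) (\<gamma> -` D)"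
  shows "y \<in> FN w D"
proof -
  have iso: "lin_isometry (\<Lambda> a)" using L_iso[OF a] .
  have wD: "w \<in> D" using V memC[OF a] by (simp add: FN_def)
  have H: "\<forall>e>0. \<exists>d>0. \<forall>Z\<in>\<gamma> -` D. norm (Z - \<Lambda> a w) < d \<longrightarrow> inner (Z - \<Lambda> a w) (\<Lambda> a y) \<le> e * norm (Z - \<Lambda> a w)"
    using V by (simp add: FN_def)
  have "\<exists>d>0. \<forall>z\<in>D. norm (z - w) < d \<longrightarrow> inner (z - w) y \<le> e * norm (z - w)" if e: "e > 0" for e
  proof -
    obtain d where d: "d > 0" and hd: "\<forall>Z\<in>\<gamma> -` D. norm (Z - \<Lambda> a w) < d \<longrightarrow> inner (Z - \<Lambda> a w) (\<Lambda> a y) \<le> e * norm (Z - \<Lambda> a w)"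
      using H e by blast
    show ?thesis
    proof (intro exI[of _ d] conjI d ballI impI)
      fix z assume z: "z \<in> D" "norm (z - w) < d"
      have zC: "\<Lambda> a z \<in> \<gamma> -` D" using memC[OF a] z by simp
      have eq1: "\<Lambda> a z - \<Lambda> a w = \<Lambda> a (z - w)" using lin_iso_diff[OF iso] by simp
      have nn: "norm (\<Lambda> a z - \<Lambda> a w) = norm (z - w)" using eq1 lin_iso_norm[OF iso] by simp
      have "inner (\<Lambda> a z - \<Lambda> a w) (\<Lambda> a y) \<le> e * norm (\<Lambda> a z - \<Lambda> a w)"
      proof -
        have "norm (\<Lambda> a z - \<Lambda> a w) < d" using nn z(2) by simp
        then show ?thesis using hd zC by blast
      qed
      then have "inner (\<Lambda> a z - \<Lambda> a w) (\<Lambda> a y) \<le> e * norm (z - w)" using nn by simp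
      then show "inner (z - w) y \<le> e * norm (z - w)" using eq1 lin_iso_inner[OF iso] by simp
    qed
  qed
  then show ?thesis using wD by (simp add: FN_def)
qed


end



context sds begin

lemma L_bl: "a \<in> A \<Longrightarrow> blinfun_apply (Blinfun (\<Lambda> a)) = \<Lambda> a"
  using L_iso by (simp add: lin_isometry_def linear_conv_bounded_linear bounded_linear_Blinfun_apply)

lemma extr_sub:
  fixes v :: "nat \<Rightarrow> 'x"
  assumes b: "\<And>n. b n \<in> A" and v: "\<And>n. norm (v n) \<le> M"
  shows "\<exists>b0\<in>A. \<exists>v0 r. strict_mono r \<and>
     (\<forall>u u0. u \<longlonglongrightarrow> u0 \<longrightarrow> (\<lambda>n. \<Lambda> (b (r n)) (u n)) \<longlonglongrightarrow> \<Lambda> b0 u0) \<and> (v \<circ> r) \<longlonglongrightarrow> v0"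
proof -
  define K where "K = (\<lambda>a. Blinfun (\<Lambda> a)) ` A"
  have "norm k \<le> 1" if kK: "k \<in> K" for k
  proof -
    obtain a where a: "a \<in> A" "k = Blinfun (\<Lambda> a)" using kK K_def by blast
    show ?thesis unfolding a(2)
      by (rule norm_blinfun_bound) (auto simp: L_bl[OF a(1)] lin_iso_norm[OF L_iso[OF a(1)]])
  qed
  then have "bounded K" unfolding bounded_iff by blast
  then have "compact K" using closedA unfolding K_def compact_eq_bounded_closed by blast
  then have "compact (K \<times> cball (0::'x) M)" by (rule compact_Times[OF _ compact_cball])
  then have sc: "seq_compact (K \<times> cball (0::'x) M)" by (rule compact_imp_seq_compact)
  have "\<forall>n. (Blinfun (\<Lambda> (b n)), v n) \<in> K \<times> cball (0::'x) M" using b v by (auto simp: K_def)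
  then obtain l r where l: "l \<in> K \<times> cball (0::'x) M" and r: "strict_mono r"
    and lim: "((\<lambda>n. (Blinfun (\<Lambda> (b n)), v n)) \<circ> r) \<longlonglongrightarrow> l"
    using seq_compactE[OF sc, of "\<lambda>n. (Blinfun (\<Lambda> (b n)), v n)"] by blast
  obtain b0 where b0: "b0 \<in> A" "fst l = Blinfun (\<Lambda> b0)" using l K_def by auto
  have l1: "(\<lambda>n. Blinfun (\<Lambda> (b (r n)))) \<longlonglongrightarrow> Blinfun (\<Lambda> b0)"
    using tendsto_fst[OF lim] b0 by (simp add: o_def)
  have l2: "(v \<circ> r) \<longlonglongrightarrow> snd l"
    using tendsto_snd[OF lim] by (simp add: o_def)
  have "(\<lambda>n. \<Lambda> (b (r n)) (u n)) \<longlonglongrightarrow> \<Lambda> b0 u0" if "u \<longlonglongrightarrow> u0" for u u0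
  proof -
    have "(\<lambda>n. blinfun_apply (Blinfun (\<Lambda> (b (r n)))) (u n)) \<longlonglongrightarrow> blinfun_apply (Blinfun (\<Lambda> b0)) u0"
      using blinfun.tendsto[OF l1 that] .
    then show ?thesis using L_bl b b0 by simp
  qed
  then show ?thesis using b0 r l2 by blast
qed

lemma frechet_sub:
  assumes V: "V \<in> FN X (\<gamma> -` D)"
  shows "\<exists>b\<in>A. X = \<Lambda> b (\<gamma> X) \<and> (\<exists>v. V = \<Lambda> b v)"
proof -
  define t where "t n = inverse (real (Suc n))" for n
  have tpos: "t n > 0" for n by (simp add: t_def)
  have tlim: "t \<longlonglongrightarrow> 0" unfolding t_def by (rule LIMSEQ_inverse_real_of_nat)
  define b where "b n = (SOME a. a \<in> A \<and> X + t n *\<^sub>R V = \<Lambda> a (\<gamma> (X + t n *\<^sub>R V)))" for n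
  have bb: "b n \<in> A \<and> X + t n *\<^sub>R V = \<Lambda> (b n) (\<gamma> (X + t n *\<^sub>R V))" for n
    unfolding b_def by (rule someI_ex) (use decomp in blast)
  have b: "\<And>n. b n \<in> A" and bX: "\<And>n. X + t n *\<^sub>R V = \<Lambda> (b n) (\<gamma> (X + t n *\<^sub>R V))"
    using bb by auto
  define x where "x = \<gamma> X"
  define xn where "xn n = \<gamma> (X + t n *\<^sub>R V)" for n
  define Zn where "Zn n = \<Lambda> (b n) x" for n
  define vn where "vn n = (1 / t n) *\<^sub>R (xn n - x)" for n
  have XC: "x \<in> D" using V by (simp add: FN_def x_def)
  have FH: "\<forall>e>0. \<exists>d>0. \<forall>Z\<in>\<gamma> -` D. norm (Z - X) < d \<longrightarrow> inner (Z - X) V \<le> e * norm (Z - X)"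
    using V by (simp add: FN_def)
  have nx: "norm x = norm X" by (simp add: x_def norm_gamma)
  have a: "norm (xn n - x) \<le> t n * norm V" for n
    using gamma_lip[of "X + t n *\<^sub>R V" X] tpos[of n] by (simp add: xn_def x_def)
  have bv: "norm (vn n) \<le> norm V" for n
  proof -
    have "norm (vn n) = norm (xn n - x) / t n" using tpos[of n] by (simp add: vn_def)
    also have "\<dots> \<le> norm V" using a[of n] tpos[of n] by (simp add: divide_le_eq mult.commute)
    finally show ?thesis .
  qed
  have c: "(norm (Zn n - X))^2 \<le> 2 * t n * inner (Zn n - X) V" for n
  proof -
    have iso: "lin_isometry (\<Lambda> (b n))" using L_iso[OF b] .
    have nZ: "norm (Zn n) = norm X" using lin_iso_norm[OF iso] nx by (simp add: Zn_def)
    have Y: "X + t n *\<^sub>R V = \<Lambda> (b n) (xn n)" using bX by (simp add: xn_def)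
    have "inner (Zn n) (X + t n *\<^sub>R V) = inner x (xn n)" unfolding Y Zn_def by (rule lin_iso_inner[OF iso])
    then have ZX: "inner (Zn n) X = inner x (xn n) - t n * inner (Zn n) V"
      by (simp add: inner_add_right)
    have "inner X (X + t n *\<^sub>R V) \<le> inner x (xn n)" using ineq by (simp add: x_def xn_def)
    then have XX: "(norm X)^2 + t n * inner X V \<le> inner x (xn n)"
      by (simp add: inner_add_right power2_norm_eq_inner)
    have "(norm (Zn n - X))^2 = (norm (Zn n))^2 + (norm X)^2 - 2 * inner (Zn n) X"
      by (simp add: power2_norm_eq_inner inner_diff_left inner_diff_right inner_commute)
    also have "\<dots> = 2 * (norm X)^2 - 2 * inner x (xn n) + 2 * t n * inner (Zn n) V" using nZ ZX by simp
    also have "\<dots> \<le> 2 * t n * inner (Zn n) V - 2 * t n * inner X V" using XX by simp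
    also have "\<dots> = 2 * t n * inner (Zn n - X) V" by (simp add: inner_diff_left right_diff_distrib)
    finally show ?thesis .
  qed
  have d: "\<Lambda> (b n) (vn n) = V + (1 / t n) *\<^sub>R (X - Zn n)" for n
  proof -
    have iso: "lin_isometry (\<Lambda> (b n))" using L_iso[OF b] .
    have Y: "\<Lambda> (b n) (xn n) = X + t n *\<^sub>R V" using bX by (simp add: xn_def)
    have "\<Lambda> (b n) (vn n) = (1 / t n) *\<^sub>R (\<Lambda> (b n) (xn n) - Zn n)"
      by (simp add: vn_def Zn_def lin_iso_scale[OF iso] lin_iso_diff[OF iso])
    also have "\<dots> = (1 / t n) *\<^sub>R (t n *\<^sub>R V) + (1 / t n) *\<^sub>R (X - Zn n)"
      unfolding Y by (simp add: algebra_simps)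
    also have "\<dots> = V + (1 / t n) *\<^sub>R (X - Zn n)" using tpos[of n] by simp
    finally show ?thesis .
  qed
  have f: "(\<lambda>n. (1 / t n) *\<^sub>R (X - Zn n)) \<longlonglongrightarrow> 0"
    unfolding LIMSEQ_iff
  proof (intro allI impI)
    fix r :: real assume r: "r > 0"
    obtain dd where dd: "dd > 0" and hd: "\<forall>Z\<in>\<gamma> -` D. norm (Z - X) < dd \<longrightarrow> inner (Z - X) V \<le> (r/4) * norm (Z - X)"
      using FH[rule_format, of "r/4"] r by auto
    have nV: "2 * norm V + 1 > 0" using norm_ge_zero[of V] by linarith
    obtain no where no: "\<forall>n\<ge>no. norm (t n - 0) < dd / (2 * norm V + 1)"
    proof -
      have "dd / (2 * norm V + 1) > 0" using dd nV by simp
      then show ?thesis using tlim[unfolded LIMSEQ_iff] that by blast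
    qed
    show "\<exists>no. \<forall>n\<ge>no. norm ((1 / t n) *\<^sub>R (X - Zn n) - 0) < r"
    proof (intro exI[of _ no] allI impI)
      fix n assume n: "n \<ge> no"
      define \<rho> where "\<rho> = norm (Zn n - X)"
      have "\<bar>t n\<bar> * (2 * norm V + 1) < dd" using no n nV by (simp add: pos_less_divide_eq)
      then have tn: "t n * (2 * norm V + 1) < dd" using tpos[of n] by simp
      have r0: "\<rho> \<ge> 0" by (simp add: \<rho>_def)
      have cs: "inner (Zn n - X) V \<le> \<rho> * norm V" unfolding \<rho>_def by (rule norm_cauchy_schwarz)
      have c2: "\<rho> * \<rho> \<le> 2 * t n * inner (Zn n - X) V" using c[of n] by (simp add: \<rho>_def power2_eq_square)
      have rho1: "\<rho> \<le> 2 * t n * norm V"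
      proof (cases "\<rho> = 0")
        case True then show ?thesis using tpos[of n] by simp
      next
        case False
        then have "\<rho> > 0" using r0 by simp
        have "2 * t n * inner (Zn n - X) V \<le> 2 * t n * (\<rho> * norm V)"
          using cs tpos[of n] by (simp add: mult_left_mono)
        then have "\<rho> * \<rho> \<le> \<rho> * (2 * t n * norm V)" using c2 by (simp add: algebra_simps)
        then show ?thesis using \<open>\<rho> > 0\<close> mult_le_cancel_left_pos by blast
      qed
      have "2 * t n * norm V \<le> t n * (2 * norm V + 1)" using tpos[of n] by (simp add: algebra_simps)
      then have "\<rho> < dd" using rho1 tn by linarith
      then have "inner (Zn n - X) V \<le> (r/4) * \<rho>"
        using hd memC[OF b[of n]] XC by (simp add: \<rho>_def Zn_def)
      then have "2 * t n * inner (Zn n - X) V \<le> 2 * t n * ((r/4) * \<rho>)"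
        using tpos[of n] by (intro mult_left_mono) auto
      then have rr: "\<rho> * \<rho> \<le> \<rho> * (2 * t n * (r/4))" using c2 by (simp add: algebra_simps)
      have rho2: "\<rho> \<le> 2 * t n * (r/4)"
      proof (cases "\<rho> = 0")
        case True then show ?thesis using tpos[of n] r by simp
      next
        case False then have "\<rho> > 0" using r0 by simp
        then show ?thesis using rr mult_le_cancel_left_pos by blast
      qed
      have "norm ((1 / t n) *\<^sub>R (X - Zn n) - 0) = \<rho> / t n"
        using tpos[of n] by (simp add: \<rho>_def norm_minus_commute)
      also have "\<dots> \<le> r / 2" using rho2 tpos[of n] by (simp add: divide_le_eq mult.commute)
      also have "\<dots> < r" using r by simp
      finally show "norm ((1 / t n) *\<^sub>R (X - Zn n) - 0) < r" .
    qed
  qed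
  obtain b0 v0 r where b0: "b0 \<in> A" and r: "strict_mono r"
    and app: "\<And>u u0. u \<longlonglongrightarrow> u0 \<Longrightarrow> (\<lambda>n. \<Lambda> (b (r n)) (u n)) \<longlonglongrightarrow> \<Lambda> b0 u0"
    and vlim: "(vn \<circ> r) \<longlonglongrightarrow> v0"
    using extr_sub[of b vn "norm V", OF b bv] by blast
  have "(\<lambda>n. \<Lambda> (b n) (vn n)) \<longlonglongrightarrow> V + 0"
    unfolding d by (intro tendsto_add tendsto_const f)
  then have "(\<lambda>n. \<Lambda> (b (r n)) (vn (r n))) \<longlonglongrightarrow> V"
    using LIMSEQ_subseq_LIMSEQ[OF _ r] by (simp add: o_def)
  moreover have "(\<lambda>n. \<Lambda> (b (r n)) (vn (r n))) \<longlonglongrightarrow> \<Lambda> b0 v0"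
    using app[OF vlim] by (simp add: o_def)
  ultimately have Veq: "V = \<Lambda> b0 v0" using LIMSEQ_unique by blast
  have "(\<lambda>n. xn n - x) \<longlonglongrightarrow> 0"
  proof (rule Lim_null_comparison)
    show "eventually (\<lambda>n. norm (xn n - x) \<le> t n * norm V) sequentially" using a by simp
    show "(\<lambda>n. t n * norm V) \<longlonglongrightarrow> 0" using tendsto_mult[OF tlim tendsto_const] by simp
  qed
  then have "xn \<longlonglongrightarrow> x" by (rule LIM_zero_cancel)
  then have "(xn \<circ> r) \<longlonglongrightarrow> x" using LIMSEQ_subseq_LIMSEQ[OF _ r] by blast
  then have "(\<lambda>n. \<Lambda> (b (r n)) (xn (r n))) \<longlonglongrightarrow> \<Lambda> b0 x"
    using app by (simp add: o_def)
  moreover have "(\<lambda>n. \<Lambda> (b n) (xn n)) \<longlonglongrightarrow> X + 0"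
  proof -
    have "(\<lambda>n. X + t n *\<^sub>R V) \<longlonglongrightarrow> X + 0 *\<^sub>R V"
      by (intro tendsto_add tendsto_const tendsto_scaleR tlim)
    then show ?thesis using bX by (simp add: xn_def)
  qed
  then have "(\<lambda>n. \<Lambda> (b (r n)) (xn (r n))) \<longlonglongrightarrow> X"
    using LIMSEQ_subseq_LIMSEQ[OF _ r] by (simp add: o_def)
  ultimately have "X = \<Lambda> b0 x" using LIMSEQ_unique by blast
  then have "X = \<Lambda> b0 (\<gamma> X)" by (simp add: x_def)
  then show ?thesis using b0 Veq by blast
qed


lemma gamma_tendsto: "xs \<longlonglongrightarrow> X \<Longrightarrow> (\<lambda>n. \<gamma> (xs n)) \<longlonglongrightarrow> \<gamma> X"
proof -
  assume H: "xs \<longlonglongrightarrow> X"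
  have "(\<lambda>n. xs n - X) \<longlonglongrightarrow> 0" using H by (simp add: LIM_zero)
  then have "(\<lambda>n. norm (xs n - X)) \<longlonglongrightarrow> 0" by (simp add: tendsto_norm_zero)
  then have "(\<lambda>n. \<gamma> (xs n) - \<gamma> X) \<longlonglongrightarrow> 0"
    by (rule Lim_null_comparison[rotated]) (simp add: gamma_lip)
  then show ?thesis by (rule LIM_zero_cancel)
qed

lemma L_tendsto: "a \<in> A \<Longrightarrow> xs \<longlonglongrightarrow> x \<Longrightarrow> (\<lambda>n. \<Lambda> a (xs n)) \<longlonglongrightarrow> \<Lambda> a x"
  using L_iso[of a] by (simp add: lin_isometry_def linear_conv_bounded_linear bounded_linear.tendsto)

lemma part1:
  "FN X (\<gamma> -` D) = {\<Lambda> a y | y a. y \<in> FN (\<gamma> X) D \<and> a \<in> spectral_index_set \<gamma> A \<Lambda> X}"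
proof (intro equalityI subsetI)
  fix V assume V: "V \<in> FN X (\<gamma> -` D)"
  obtain b v where b: "b \<in> A" "X = \<Lambda> b (\<gamma> X)" "V = \<Lambda> b v" using frechet_sub[OF V] by blast
  have "\<Lambda> b v \<in> FN (\<Lambda> b (\<gamma> X)) (\<gamma> -` D)" using V b by simp
  then have "v \<in> FN (\<gamma> X) D" by (rule frechet_down[OF b(1)])
  then show "V \<in> {\<Lambda> a y | y a. y \<in> FN (\<gamma> X) D \<and> a \<in> spectral_index_set \<gamma> A \<Lambda> X}"
    using b by (auto simp: spectral_index_set_def)
next
  fix V assume "V \<in> {\<Lambda> a y | y a. y \<in> FN (\<gamma> X) D \<and> a \<in> spectral_index_set \<gamma> A \<Lambda> X}"
  then obtain y a where y: "V = \<Lambda> a y" "y \<in> FN (\<gamma> X) D" "a \<in> A" "X = \<Lambda> a (\<gamma> X)"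
    by (auto simp: spectral_index_set_def)
  have "\<Lambda> a y \<in> FN (\<Lambda> a (\<gamma> X)) (\<gamma> -` D)" by (rule frechet_up[OF y(3) y(2)])
  then show "V \<in> FN X (\<gamma> -` D)" using y by simp
qed

lemma part2:
  "limiting_normal_cone X (\<gamma> -` D) =
    {\<Lambda> a y | y a. y \<in> limiting_normal_cone (\<gamma> X) D \<and> a \<in> spectral_index_set \<gamma> A \<Lambda> X}"
proof (cases "\<gamma> X \<in> D")
  case False then show ?thesis by (simp add: limiting_normal_cone_def)
next
  case True
  show ?thesis
  proof (intro equalityI subsetI)
    fix V assume "V \<in> limiting_normal_cone X (\<gamma> -` D)"
    then obtain xs ys where xs: "xs \<longlonglongrightarrow> X" and ys: "ys \<longlonglongrightarrow> V" and F: "\<And>n. ys n \<in> FN (xs n) (\<gamma> -` D)"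
      using True by (auto simp: limiting_normal_cone_def FN_eq)
    define P where "P n bv = (fst bv \<in> A \<and> xs n = \<Lambda> (fst bv) (\<gamma> (xs n)) \<and> ys n = \<Lambda> (fst bv) (snd bv))" for n bv
    have ex: "\<exists>bv. P n bv" for n using frechet_sub[OF F[of n]] by (auto simp: P_def)
    define bv where "bv n = (SOME bv. P n bv)" for n
    have Pn: "P n (bv n)" for n unfolding bv_def using ex[of n] by (rule someI_ex)
    define b where "b n = fst (bv n)" for n
    define v where "v n = snd (bv n)" for n
    have b: "\<And>n. b n \<in> A" and bx: "\<And>n. xs n = \<Lambda> (b n) (\<gamma> (xs n))" and bv': "\<And>n. ys n = \<Lambda> (b n) (v n)"
      using Pn by (auto simp: P_def b_def v_def)
    obtain M where M: "\<And>n. norm (ys n) \<le> M"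
      using convergent_imp_Bseq[OF convergentI[OF ys]] unfolding Bseq_def by blast
    have vM: "norm (v n) \<le> M" for n using M[of n] bv'[of n] lin_iso_norm[OF L_iso[OF b[of n]]] by simp
    have vF: "v n \<in> FN (\<gamma> (xs n)) D" for n
      using F[of n] bx[of n] bv'[of n] frechet_down[OF b[of n]] by metis
    obtain b0 v0 r where b0: "b0 \<in> A" and r: "strict_mono r"
      and app: "\<And>u u0. u \<longlonglongrightarrow> u0 \<Longrightarrow> (\<lambda>n. \<Lambda> (b (r n)) (u n)) \<longlonglongrightarrow> \<Lambda> b0 u0"
      and vlim: "(v \<circ> r) \<longlonglongrightarrow> v0"
      using extr_sub[of b v M, OF b vM] by blast
    have gx: "(\<lambda>n. \<gamma> (xs n)) \<longlonglongrightarrow> \<gamma> X" using gamma_tendsto[OF xs] .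
    then have gxr: "(\<lambda>n. \<gamma> (xs (r n))) \<longlonglongrightarrow> \<gamma> X" using LIMSEQ_subseq_LIMSEQ[OF _ r] by (simp add: o_def)
    have "(\<lambda>n. \<Lambda> (b (r n)) (\<gamma> (xs (r n)))) \<longlonglongrightarrow> \<Lambda> b0 (\<gamma> X)" using app[OF gxr] .
    moreover have "(\<lambda>n. \<Lambda> (b (r n)) (\<gamma> (xs (r n)))) \<longlonglongrightarrow> X"
      using LIMSEQ_subseq_LIMSEQ[OF xs r] bx by (simp add: o_def)
    ultimately have X0: "X = \<Lambda> b0 (\<gamma> X)" using LIMSEQ_unique by blast
    have "(\<lambda>n. \<Lambda> (b (r n)) (v (r n))) \<longlonglongrightarrow> \<Lambda> b0 v0" using app[OF vlim[unfolded o_def]] .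
    moreover have "(\<lambda>n. \<Lambda> (b (r n)) (v (r n))) \<longlonglongrightarrow> V"
      using LIMSEQ_subseq_LIMSEQ[OF ys r] bv' by (simp add: o_def)
    ultimately have V0: "V = \<Lambda> b0 v0" using LIMSEQ_unique by blast
    have "\<exists>xs' ys'. xs' \<longlonglongrightarrow> \<gamma> X \<and> ys' \<longlonglongrightarrow> v0 \<and> (\<forall>n. ys' n \<in> FN (xs' n) D)"
      using gxr vlim vF by (intro exI[of _ "\<lambda>n. \<gamma> (xs (r n))"] exI[of _ "\<lambda>n. v (r n)"]) (simp add: o_def)
    then have "v0 \<in> limiting_normal_cone (\<gamma> X) D"
      by (simp add: limiting_normal_cone_def FN_eq True)
    then show "V \<in> {\<Lambda> a y | y a. y \<in> limiting_normal_cone (\<gamma> X) D \<and> a \<in> spectral_index_set \<gamma> A \<Lambda> X}"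
      using V0 X0 b0 by (auto simp: spectral_index_set_def)
  next
    fix V assume "V \<in> {\<Lambda> a y | y a. y \<in> limiting_normal_cone (\<gamma> X) D \<and> a \<in> spectral_index_set \<gamma> A \<Lambda> X}"
    then obtain y a where y: "V = \<Lambda> a y" "y \<in> limiting_normal_cone (\<gamma> X) D" "a \<in> A" "X = \<Lambda> a (\<gamma> X)"
      by (auto simp: spectral_index_set_def)
    then obtain xs ys where xs: "xs \<longlonglongrightarrow> \<gamma> X" and ys: "ys \<longlonglongrightarrow> y" and F: "\<And>n. ys n \<in> FN (xs n) D"
      using True by (auto simp: limiting_normal_cone_def FN_eq)
    have "(\<lambda>n. \<Lambda> a (xs n)) \<longlonglongrightarrow> X" using L_tendsto[OF y(3) xs] y(4) by simp
    moreover have "(\<lambda>n. \<Lambda> a (ys n)) \<longlonglongrightarrow> V" using L_tendsto[OF y(3) ys] y(1) by simp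
    moreover have "\<Lambda> a (ys n) \<in> FN (\<Lambda> a (xs n)) (\<gamma> -` D)" for n by (rule frechet_up[OF y(3) F])
    ultimately show "V \<in> limiting_normal_cone X (\<gamma> -` D)"
      unfolding limiting_normal_cone_def FN_eq using True by auto
  qed
qed

end

theorem proposition3p4:
  fixes G :: "('g, 'm) monoid_scheme"
    and act :: "'g \<Rightarrow> 'x::euclidean_space \<Rightarrow> 'x"
    and \<gamma> :: "'h::euclidean_space \<Rightarrow> 'x"
    and A :: "'a set"
    and \<Lambda> :: "'a \<Rightarrow> 'x \<Rightarrow> 'h"
    and D :: "'x set"
    and X :: 'h
  assumes "spectral_decomposition_system G act \<gamma> A \<Lambda>"
    and "closed ((\<lambda>a. Blinfun (\<Lambda> a)) ` A)"
    and "D \<noteq> {}"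
    and "S_invariant G act D"
  shows "(frechet_normal_cone X (\<gamma> -` D) =
           {\<Lambda> a y | y a. y \<in> frechet_normal_cone (\<gamma> X) D \<and> a \<in> spectral_index_set \<gamma> A \<Lambda> X}) \<and>
         (limiting_normal_cone X (\<gamma> -` D) =
           {\<Lambda> a y | y a. y \<in> limiting_normal_cone (\<gamma> X) D \<and> a \<in> spectral_index_set \<gamma> A \<Lambda> X})"
proof -
  obtain \<tau> where tau: "\<forall>g\<in>carrier G. \<forall>x. \<tau> (act g x) = \<tau> x"
      "\<forall>x. \<exists>g\<in>carrier G. \<tau> x = act g x" "\<forall>a\<in>A. \<gamma> \<circ> \<Lambda> a = \<tau>"
    using assms(1) unfolding spectral_decomposition_system_def by blast
  have tau3: "\<And>a x. a \<in> A \<Longrightarrow> \<gamma> (\<Lambda> a x) = \<tau> x" using tau(3) by (metis comp_apply)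
  interpret S: sds G act \<gamma> A \<Lambda> \<tau> D
    apply (rule sds.intro)
    using assms tau tau3
    by (auto simp: spectral_decomposition_system_def isometric_group_action_def S_invariant_def)
  show ?thesis using S.part1 S.part2 by (simp add: FN_eq)
qed

end
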